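(* Let $\Pi_n=\{\pi_1,\ldots,\pi_n\}$ be a finite set of policies of a discrete mean-field game (setting in the context). Consider the protocol: for $t=1,\ldots,T$, a learner chooses $\nu_t\in\Delta(\Pi_n)$ based on the past reward functions $R_1,\ldots,R_{t-1}$, then observes the linear reward function $R_t(\nu)=\mathbb E_{\pi\sim\nu}[J(\pi,\mu(\nu_t))]$ on $\Delta(\Pi_n)$ and receives $R_t(\nu_t)$. Let $\rho=\frac1T\sum_{t=1}^T\delta_{\nu_t}$. (i) If the learner has external regret $\max_{\nu\in\Delta(\Pi_n)}\sum_{t=1}^TR_t(\nu)-\sum_{t=1}^TR_t(\nu_t)=O(\sqrt T)$, then $\rho$ is an $O(1/\sqrt T)$-mean-field coarse correlated equilibrium of the restricted game, i.e. $\max_{i}\mathbb E_{\nu\sim\rho}\big[J(\pi_i,\mu(\nu))-\mathbb E_{\pi\sim\nu}J(\pi,\mu(\nu))\big]=O(1/\sqrt T)$. (ii) If the learner has internal regret $\max_{i,j}\sum_{t=1}^T\nu_t(\pi_i)\big(J(\pi_j,\mu(\nu_t))-J(\pi_i,\mu(\nu_t))\big)=O(\sqrt T)$, then $\rho$ is an $O(1/\sqrt T)$-mean-field correlated equilibrium of the restricted game, i.e. $\max_{i,j}\mathbb E_{\nu\sim\rho}\big[\nu(\pi_i)\big(J(\pi_j,\mu(\nu))-J(\pi_i,\mu(\nu))\big)\big]=O(1/\sqrt T)$.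
   Context: A discrete mean-field game consists of a finite state set $\mathcal X$, a finite action set $\mathcal A$, a reward $r:\mathcal X\times\mathcal A\times\Delta(\mathcal X)\to\mathbb R$, transition probabilities $p(x'\mid x,a)$ not depending on the population distribution, and an initial distribution $\mu_0\in\Delta(\mathcal X)$. A policy is $\pi:\mathcal X\to\Delta(\mathcal A)$; $\mu^\pi$ is its state occupancy measure (either $\gamma$-discounted or finite-horizon with time in the state), and $J(\pi,\mu)=\sum_{x,a}\mu^\pi(x)\pi(x,a)r(x,a,\mu)$ is the expected payoff. For $\nu\in\Delta(\Pi_n)$, $\mu(\nu)=\sum_\pi\nu(\pi)\mu^\pi$. A correlation device is a distribution $\rho$ over $\Delta(\Pi_n)$ (here finitely supported). *)

theory Defs
  imports "HOL-Probability.Probability" "HOL-Library.Landau_Symbols"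
begin

text \<open>A population distribution / occupancy measure is a function 'x \<Rightarrow> real,
  a policy is pol :: 'x \<Rightarrow> 'a \<Rightarrow> real (pol x a = probability of action a in state x),
  transitions p x a y = p(y | x, a), rewards r x a mu.\<close>

definition is_dist :: "('b::finite \<Rightarrow> real) \<Rightarrow> bool" where
  "is_dist f \<longleftrightarrow> (\<forall>b. 0 \<le> f b) \<and> (\<Sum>b\<in>UNIV. f b) = 1"

definition is_policy :: "('x::finite \<Rightarrow> 'a::finite \<Rightarrow> real) \<Rightarrow> bool" where
  "is_policy pol \<longleftrightarrow> (\<forall>x. is_dist (pol x))"

definition is_transition :: "('x::finite \<Rightarrow> 'a::finite \<Rightarrow> 'x \<Rightarrow> real) \<Rightarrow> bool" where
  "is_transition p \<longleftrightarrow> (\<forall>x a. is_dist (p x a))"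

primrec sdist :: "('x::finite \<Rightarrow> 'a::finite \<Rightarrow> 'x \<Rightarrow> real) \<Rightarrow> ('x \<Rightarrow> real)
    \<Rightarrow> ('x \<Rightarrow> 'a \<Rightarrow> real) \<Rightarrow> nat \<Rightarrow> 'x \<Rightarrow> real" where
  "sdist p mu0 pol 0 = mu0"
| "sdist p mu0 pol (Suc t) =
     (\<lambda>y. \<Sum>x\<in>UNIV. \<Sum>a\<in>UNIV. sdist p mu0 pol t x * pol x a * p x a y)"

definition occ :: "real \<Rightarrow> ('x::finite \<Rightarrow> 'a::finite \<Rightarrow> 'x \<Rightarrow> real) \<Rightarrow> ('x \<Rightarrow> real)
    \<Rightarrow> ('x \<Rightarrow> 'a \<Rightarrow> real) \<Rightarrow> 'x \<Rightarrow> real" where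
  "occ gamma p mu0 pol x = (1 - gamma) * (\<Sum>t. gamma ^ t * sdist p mu0 pol t x)"

definition Jpay :: "('x::finite \<Rightarrow> 'a::finite \<Rightarrow> ('x \<Rightarrow> real) \<Rightarrow> real) \<Rightarrow> real
    \<Rightarrow> ('x \<Rightarrow> 'a \<Rightarrow> 'x \<Rightarrow> real) \<Rightarrow> ('x \<Rightarrow> real)
    \<Rightarrow> ('x \<Rightarrow> 'a \<Rightarrow> real) \<Rightarrow> ('x \<Rightarrow> real) \<Rightarrow> real" where
  "Jpay r gamma p mu0 pol mu =
     (\<Sum>x\<in>UNIV. \<Sum>a\<in>UNIV. occ gamma p mu0 pol x * pol x a * r x a mu)"

text \<open>The restricted policy set Pi_n is given by an enumeration Pol of a finite index type 'p;
  nu :: 'p \<Rightarrow> real is an element of Delta(Pi_n).  mu(nu) = sum_pi nu(pol) mu^pol.\<close>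
definition mix :: "real \<Rightarrow> ('x::finite \<Rightarrow> 'a::finite \<Rightarrow> 'x \<Rightarrow> real) \<Rightarrow> ('x \<Rightarrow> real)
    \<Rightarrow> ('p::finite \<Rightarrow> 'x \<Rightarrow> 'a \<Rightarrow> real) \<Rightarrow> ('p \<Rightarrow> real) \<Rightarrow> 'x \<Rightarrow> real" where
  "mix gamma p mu0 Pol nu = (\<lambda>x. \<Sum>i\<in>UNIV. nu i * occ gamma p mu0 (Pol i) x)"

definition payoff where
  "payoff r gamma p mu0 Pol i nu = Jpay r gamma p mu0 (Pol i) (mix gamma p mu0 Pol nu)"

definition reward_fn where
  "reward_fn r gamma p mu0 Pol nut = (\<lambda>nu. \<Sum>i\<in>UNIV. nu i * payoff r gamma p mu0 Pol i nut)"

text \<open>A learner maps the list of past reward functions to an element of Delta(Pi_n).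
  hist t = [R_1, ..., R_t]; the play at round t+1 is L (hist t) (rounds indexed from 0).\<close>
primrec hist where
  "hist r gamma p mu0 Pol L 0 = []"
| "hist r gamma p mu0 Pol L (Suc t) =
     hist r gamma p mu0 Pol L t @ [reward_fn r gamma p mu0 Pol (L (hist r gamma p mu0 Pol L t))]"

definition play where
  "play r gamma p mu0 Pol L t = L (hist r gamma p mu0 Pol L t)"

definition Delta_set :: "('p::finite \<Rightarrow> real) set" where
  "Delta_set = {nu. is_dist nu}"

definition ext_regret where
  "ext_regret r gamma p mu0 Pol L T =
     (SUP nu\<in>Delta_set. \<Sum>t<T. reward_fn r gamma p mu0 Pol (play r gamma p mu0 Pol L t) nu)
     - (\<Sum>t<T. reward_fn r gamma p mu0 Pol (play r gamma p mu0 Pol L t) (play r gamma p mu0 Pol L t))"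

definition int_regret where
  "int_regret r gamma p mu0 Pol L T =
     Max ((\<lambda>(i, j). \<Sum>t<T. play r gamma p mu0 Pol L t i *
        (payoff r gamma p mu0 Pol j (play r gamma p mu0 Pol L t)
         - payoff r gamma p mu0 Pol i (play r gamma p mu0 Pol L t))) ` UNIV)"

definition rho where
  "rho r gamma p mu0 Pol L T = pmf_of_multiset (mset (map (play r gamma p mu0 Pol L) [0..<T]))"

definition cce_gap where
  "cce_gap r gamma p mu0 Pol (R :: ('p::finite \<Rightarrow> real) pmf) =
     Max ((\<lambda>i. measure_pmf.expectation R (\<lambda>nu.
        payoff r gamma p mu0 Pol i nu - (\<Sum>j\<in>UNIV. nu j * payoff r gamma p mu0 Pol j nu))) ` UNIV)"

definition ce_gap where
  "ce_gap r gamma p mu0 Pol (R :: ('p::finite \<Rightarrow> real) pmf) =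
     Max ((\<lambda>(i, j). measure_pmf.expectation R (\<lambda>nu.
        nu i * (payoff r gamma p mu0 Pol j nu - payoff r gamma p mu0 Pol i nu))) ` UNIV)"

end

theory Submission imports Defs begin

lemma sum_list_count_real:
  fixes f :: "'b \<Rightarrow> real"
  shows "sum_list (map f xs) = (\<Sum>x\<in>set xs. real (count_list xs x) * f x)"
proof (induction xs)
  case (Cons x xs)
  show ?case (is "?l = ?r")
  proof cases
    assume "x \<in> set xs"
    have "?l = f x + (\<Sum>x\<in>set xs. real (count_list xs x) * f x)" by (simp add: Cons.IH)
    also have "set xs = insert x (set xs - {x})" using \<open>x \<in> set xs\<close> by blast
    also have "f x + (\<Sum>x\<in>insert x (set xs - {x}). real (count_list xs x) * f x) = ?r"
      by (simp add: sum.insert_remove eq_commute algebra_simps)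
    finally show ?thesis .
  next
    assume "x \<notin> set xs"
    hence "\<And>xa. xa \<in> set xs \<Longrightarrow> x \<noteq> xa" by blast
    thus ?thesis by (simp add: Cons.IH \<open>x \<notin> set xs\<close>)
  qed
qed simp

lemma exp_mset_list:
  fixes xs :: "'b list" and f :: "'b \<Rightarrow> real"
  assumes "xs \<noteq> []"
  shows "measure_pmf.expectation (pmf_of_multiset (mset xs)) f = sum_list (map f xs) / length xs"
proof -
  have ne: "mset xs \<noteq> {#}" using assms by simp
  have "measure_pmf.expectation (pmf_of_multiset (mset xs)) f = (\<Sum>a\<in>set xs. f a * pmf (pmf_of_multiset (mset xs)) a)"
    by (rule integral_measure_pmf_real) (use ne in auto)
  also have "\<dots> = (\<Sum>a\<in>set xs. f a * count_list xs a) / length xs"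
    using ne by (simp add: sum_divide_distrib count_mset)
  also have "\<dots> = sum_list (map f xs) / length xs"
    by (simp add: sum_list_count_real mult.commute)
  finally show ?thesis .
qed

lemma exp_mset:
  fixes nu :: "nat \<Rightarrow> 'b" and f :: "'b \<Rightarrow> real"
  assumes "T > 0"
  shows "measure_pmf.expectation (pmf_of_multiset (mset (map nu [0..<T]))) f = (\<Sum>t<T. f (nu t)) / T"
proof -
  have "map nu [0..<T] \<noteq> []" using assms by simp
  from exp_mset_list[OF this, of f] show ?thesis
    by (simp add: sum_list_sum_nth atLeast0LessThan)
qed

lemma sup_lin:
  fixes c :: "'p::finite \<Rightarrow> real"
  shows "(SUP v\<in>Delta_set. \<Sum>i\<in>UNIV. v i * c i) = Max (range c)"
proof (rule cSup_eq_maximum)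
  obtain k where k: "c k = Max (range c)"
    by (metis (mono_tags, lifting) Max_in finite UNIV_not_empty finite_imageI image_iff image_is_empty)
  let ?e = "\<lambda>j. if j = k then 1 else (0::real)"
  have "(\<Sum>i\<in>UNIV. ?e i * c i) = (\<Sum>i\<in>UNIV. if i = k then c i else 0)" by (rule sum.cong) auto
  moreover have "\<dots> = Max (range c)" using k by simp
  ultimately have h1: "(\<Sum>i\<in>UNIV. ?e i * c i) = Max (range c)" by simp
  have h2: "?e \<in> Delta_set" by (simp add: Delta_set_def is_dist_def)
  show "Max (range c) \<in> (\<lambda>v. \<Sum>i\<in>UNIV. v i * c i) ` Delta_set" by (rule image_eqI[where f="\<lambda>v. \<Sum>i\<in>UNIV. v i * c i", OF h1[symmetric] h2])
  show "x \<le> Max (range c)" if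
    "x \<in> (\<lambda>v. \<Sum>i\<in>UNIV. v i * c i) ` Delta_set"
      for x
  proof -
    from that obtain v where v: "is_dist v" "x = (\<Sum>i\<in>UNIV. v i * c i)" by (auto simp: Delta_set_def)
    have "x \<le> (\<Sum>i\<in>UNIV. v i * Max (range c))"
      unfolding v(2) by (rule sum_mono, rule mult_left_mono) (use v(1) in \<open>auto simp: is_dist_def\<close>)
    also have "\<dots> = Max (range c)" using v(1) by (simp add: is_dist_def flip: sum_distrib_right)
    finally show "x \<le> Max (range c)" .
  qed
qed

lemma max_div:
  fixes g :: "'q::finite \<Rightarrow> real"
  assumes "T > 0"
  shows "Max ((\<lambda>i. g i / T) ` UNIV) = Max (range g) / T"
proof -
  have "mono (\<lambda>x::real. x / T)" using assms by (auto simp: mono_def divide_right_mono)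
  then have "(\<lambda>x. x / T) (Max (range g)) = Max ((\<lambda>x. x / T) ` range g)"
    by (rule mono_Max_commute) auto
  then show ?thesis by (simp add: image_image)
qed

lemma bigo_div:
  fixes f g :: "nat \<Rightarrow> real"
  assumes "f \<in> O(\<lambda>T. sqrt (real T))" and "\<forall>\<^sub>F T in at_top. g T = f T / T"
  shows "g \<in> O(\<lambda>T. 1 / sqrt (real T))"
proof -
  from assms(1) obtain c where c: "c > 0" "\<forall>\<^sub>F T in at_top. norm (f T) \<le> c * norm (sqrt (real T))"
    by (elim landau_o.bigE)
  have "\<forall>\<^sub>F T in at_top. norm (g T) \<le> c * norm (1 / sqrt (real T))"
    using c(2) assms(2) eventually_gt_at_top[of 0]
  proof eventually_elim
    case (elim T)
    have sq: "sqrt (real T) * sqrt (real T) = real T" by simp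
    have pos: "sqrt (real T) > 0" using elim(3) by simp
    have s: "sqrt (real T) / real T = 1 / sqrt (real T)"
      using pos sq by (simp add: field_simps)
    have "norm (g T) = norm (f T) / T" using elim by simp
    also have "\<dots> \<le> c * sqrt (real T) / T" using elim by (simp add: divide_right_mono)
    also have "\<dots> = c * (sqrt (real T) / T)" by simp
    also have "\<dots> = c * (1 / sqrt (real T))" using s by simp
    finally show ?case by simp
  qed
  then show ?thesis by (rule bigoI)
qed

lemma max_sub:
  fixes c :: "'q::finite \<Rightarrow> real"
  shows "Max ((\<lambda>i. c i - S) ` UNIV) = Max (range c) - S"
proof -
  have "mono (\<lambda>x::real. x - S)" by (auto simp: mono_def)
  then have "(\<lambda>x. x - S) (Max (range c)) = Max ((\<lambda>x. x - S) ` range c)"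
    by (rule mono_Max_commute) auto
  then show ?thesis by (simp add: image_image)
qed

theorem mainTheorem4:
  fixes r :: "'x::finite \<Rightarrow> 'a::finite \<Rightarrow> ('x \<Rightarrow> real) \<Rightarrow> real"
    and p :: "'x \<Rightarrow> 'a \<Rightarrow> 'x \<Rightarrow> real"
    and mu0 :: "'x \<Rightarrow> real"
    and gamma :: real
    and Pol :: "'p::finite \<Rightarrow> 'x \<Rightarrow> 'a \<Rightarrow> real"
    and L :: "(('p \<Rightarrow> real) \<Rightarrow> real) list \<Rightarrow> ('p \<Rightarrow> real)"
  assumes "0 \<le> gamma" and "gamma < 1"
    and "is_transition p"
    and "is_dist mu0"
    and "\<forall>i. is_policy (Pol i)"
    and "\<forall>h. is_dist (L h)"
  shows
    "((\<lambda>T. ext_regret r gamma p mu0 Pol L T) \<in> O(\<lambda>T. sqrt (real T))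
        \<longrightarrow> (\<lambda>T. cce_gap r gamma p mu0 Pol (rho r gamma p mu0 Pol L T)) \<in> O(\<lambda>T. 1 / sqrt (real T)))
     \<and> ((\<lambda>T. int_regret r gamma p mu0 Pol L T) \<in> O(\<lambda>T. sqrt (real T))
        \<longrightarrow> (\<lambda>T. ce_gap r gamma p mu0 Pol (rho r gamma p mu0 Pol L T)) \<in> O(\<lambda>T. 1 / sqrt (real T)))"
proof -
  define nu where "nu = play r gamma p mu0 Pol L"
  define P where "P = (\<lambda>i v. payoff r gamma p mu0 Pol i v)"
  have rho_eq: "rho r gamma p mu0 Pol L T = pmf_of_multiset (mset (map nu [0..<T]))" for T
    by (simp add: rho_def nu_def)
  have cce: "cce_gap r gamma p mu0 Pol (rho r gamma p mu0 Pol L T) = ext_regret r gamma p mu0 Pol L T / T"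
    if T: "T > 0" for T
  proof -
    define c where "c = (\<lambda>i. \<Sum>t<T. P i (nu t))"
    define S where "S = (\<Sum>t<T. \<Sum>j\<in>UNIV. nu t j * P j (nu t))"
    have rw: "(\<Sum>t<T. reward_fn r gamma p mu0 Pol (nu t) v) = (\<Sum>i\<in>UNIV. v i * c i)" for v
      unfolding reward_fn_def c_def P_def by (simp add: sum_distrib_left sum.swap[of _ "{..<T}"])
    have "ext_regret r gamma p mu0 Pol L T = Max (range c) - S"
      unfolding ext_regret_def nu_def[symmetric] rw sup_lin
      by (simp add: S_def reward_fn_def P_def)
    moreover have "cce_gap r gamma p mu0 Pol (rho r gamma p mu0 Pol L T) = Max ((\<lambda>i. (c i - S) / T) ` UNIV)"
      unfolding cce_gap_def rho_eq exp_mset[OF T] P_def[symmetric]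
      by (simp add: c_def S_def sum_subtractf)
    ultimately show ?thesis using max_div[of "real T", of "\<lambda>i. c i - S"] max_sub[of c S] using T by simp
  qed
  have ce: "ce_gap r gamma p mu0 Pol (rho r gamma p mu0 Pol L T) = int_regret r gamma p mu0 Pol L T / T"
    if T: "T > 0" for T
  proof -
    define g where "g = (\<lambda>(i, j). \<Sum>t<T. nu t i * (P j (nu t) - P i (nu t)))"
    have "ce_gap r gamma p mu0 Pol (rho r gamma p mu0 Pol L T) = Max ((\<lambda>q. g q / T) ` UNIV)"
      unfolding ce_gap_def rho_eq exp_mset[OF T] P_def[symmetric] g_def
      by (simp add: case_prod_beta)
    moreover have "int_regret r gamma p mu0 Pol L T = Max (range g)"
      unfolding int_regret_def g_def nu_def P_def by simp
    ultimately show ?thesis using max_div[of "real T", of g] using T by simp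
  qed
  show ?thesis
  proof (intro conjI impI)
    assume A: "(\<lambda>T. ext_regret r gamma p mu0 Pol L T) \<in> O(\<lambda>T. sqrt (real T))"
    show "(\<lambda>T. cce_gap r gamma p mu0 Pol (rho r gamma p mu0 Pol L T)) \<in> O(\<lambda>T. 1 / sqrt (real T))"
      by (rule bigo_div[OF A eventually_mono[OF eventually_gt_at_top[of 0] cce]])
  next
    assume A: "(\<lambda>T. int_regret r gamma p mu0 Pol L T) \<in> O(\<lambda>T. sqrt (real T))"
    show "(\<lambda>T. ce_gap r gamma p mu0 Pol (rho r gamma p mu0 Pol L T)) \<in> O(\<lambda>T. 1 / sqrt (real T))"
      by (rule bigo_div[OF A eventually_mono[OF eventually_gt_at_top[of 0] ce]])
  qed
qed

end
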